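(* Let $l\ge 1$, let $1\le k\le l$ and let $S\subseteq\{1,\dots,l\}$. A key of length $l$ and index $k$ and a lock of length $l$ and index set $S$ can match (i.e. the key can be placed inside the lock, with its rectangle occupying the rectangular part of the lock's negative space, and the remaining uncovered part of the lock's negative space can be filled exactly by copies of the tooth) if and only if $k\in S$.
   Context: The tooth is the plus-shaped $9$-omino consisting of a central unit square and two unit squares extending in a straight line from it in each of the four directions. A key is a bump on an edge of a polyomino: a key of length $l$ and index $k$ is a $(6l-2)\times 1$ rectangle of unit squares, perpendicular to the edge, together with one copy of the tooth attached to the side of the rectangle at the $(6k-2)$-th square of the rectangle (counting from the square closest to the edge). A lock is a dent on an edge: the negative space of a lock of length $l$ and index set $S$ is a $(6l-2)\times 1$ rectangle perpendicular to the edge together with one tooth-shaped region attached (in the same manner as for a key) at the $(6x-2)$-th square (counting from the square closest to the edge) for every $x\in S$. *)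

theory Defs
  imports Main
begin

text \<open>Unit squares are cells of the integer grid, a cell being a pair (x, y) of integers.\<close>

type_synonym cell = "int \<times> int"

definition tooth_at :: "cell \<Rightarrow> cell set" where
  "tooth_at c = {(fst c + d, snd c) | d. \<bar>d\<bar> \<le> 2} \<union> {(fst c, snd c + d) | d. \<bar>d\<bar> \<le> 2}"

text \<open>Coordinates: the edge of the polyomino is the horizontal line below row 1; the
  (6l-2) x 1 rectangle is the column x = 0, rows 1..6l-2, and its j-th square
  (counting from the square closest to the edge) is (0, j).\<close>
definition rect :: "nat \<Rightarrow> cell set" where
  "rect l = {(0, j) | j. 1 \<le> j \<and> j \<le> 6 * int l - 2}"

text \<open>A tooth attached to the (left) side of the rectangle at its j-th square:
  the tip of one arm is the cell adjacent to (0, j), i.e. the centre is (-3, j).\<close>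
definition tooth_attached :: "int \<Rightarrow> cell set" where
  "tooth_attached j = tooth_at (-3, j)"

definition key :: "nat \<Rightarrow> nat \<Rightarrow> cell set" where
  "key l k = rect l \<union> tooth_attached (6 * int k - 2)"

definition lock_space :: "nat \<Rightarrow> nat set \<Rightarrow> cell set" where
  "lock_space l S = rect l \<union> (\<Union>x\<in>S. tooth_attached (6 * int x - 2))"

definition grid_iso :: "(cell \<Rightarrow> cell) \<Rightarrow> bool" where
  "grid_iso f \<longleftrightarrow> (\<exists>a b c d tx ty.
      (a, b, c, d) \<in> {(1,0,0,1), (-1,0,0,1), (1,0,0,-1), (-1,0,0,-1),
                      (0,1,1,0), (0,-1,1,0), (0,1,-1,0), (0,-1,-1,0)} \<and>
      f = (\<lambda>(x, y). (a * x + b * y + tx, c * x + d * y + ty)))"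

definition tileable_by_teeth :: "cell set \<Rightarrow> bool" where
  "tileable_by_teeth R \<longleftrightarrow> (\<exists>P. (\<forall>T\<in>P. \<exists>f. grid_iso f \<and> T = f ` tooth_at (0, 0)) \<and>
      (\<forall>T1\<in>P. \<forall>T2\<in>P. T1 \<noteq> T2 \<longrightarrow> T1 \<inter> T2 = {}) \<and> \<Union>P = R)"

definition can_match :: "nat \<Rightarrow> nat \<Rightarrow> nat set \<Rightarrow> bool" where
  "can_match l k S \<longleftrightarrow> (\<exists>f. grid_iso f \<and> f ` rect l = rect l \<and>
      f ` key l k \<subseteq> lock_space l S \<and> tileable_by_teeth (lock_space l S - f ` key l k))"

end

theory Submission
  imports Defs
begin

lemma lock_x: "(x,y) \<in> lock_space l S \<Longrightarrow> x \<le> 0"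
  by (auto simp: lock_space_def rect_def tooth_attached_def tooth_at_def)

lemma lock_m1: "(-1,y) \<in> lock_space l S \<Longrightarrow> \<exists>x\<in>S. y = 6 * int x - 2"
  by (auto simp: lock_space_def rect_def tooth_attached_def tooth_at_def)

lemma tooth_transl: "tooth_at (-3, j) = (\<lambda>(x, y). (1 * x + 0 * y + (-3), 0 * x + 1 * y + j)) ` tooth_at (0, 0)"
proof -
  have "tooth_at (-3, j) = (\<lambda>(x, y). (x + (-3), y + j)) ` tooth_at (0, 0)"
    unfolding tooth_at_def by (auto simp: image_iff) force+
  then show ?thesis by simp
qed

lemma teeth_disj:
  assumes "p \<in> tooth_attached (6 * int x - 2)" "p \<in> tooth_attached (6 * int y - 2)"
  shows "x = y"
  using assms by (auto simp: tooth_attached_def tooth_at_def)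

lemma diff_eq:
  assumes "k \<in> S"
  shows "lock_space l S - key l k = (\<Union>x\<in>S-{k}. tooth_attached (6 * int x - 2))"
proof
  show "lock_space l S - key l k \<subseteq> (\<Union>x\<in>S-{k}. tooth_attached (6 * int x - 2))"
    by (auto simp: lock_space_def key_def)
next
  show "(\<Union>x\<in>S-{k}. tooth_attached (6 * int x - 2)) \<subseteq> lock_space l S - key l k"
  proof
    fix p assume "p \<in> (\<Union>x\<in>S-{k}. tooth_attached (6 * int x - 2))"
    then obtain x where x: "x \<in> S" "x \<noteq> k" "p \<in> tooth_attached (6 * int x - 2)" by auto
    have "p \<notin> rect l" using x(3) by (auto simp: rect_def tooth_attached_def tooth_at_def)
    moreover have "p \<notin> tooth_attached (6 * int k - 2)" using teeth_disj x by blast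
    ultimately show "p \<in> lock_space l S - key l k" using x by (auto simp: lock_space_def key_def)
  qed
qed

theorem lemma2p2:
  fixes l k :: nat and S :: "nat set"
  assumes "l \<ge> 1" and "1 \<le> k" and "k \<le> l" and "S \<subseteq> {1..l}"
  shows "can_match l k S \<longleftrightarrow> k \<in> S"
proof
  assume "can_match l k S"
  then obtain f where f: "grid_iso f" and img: "f ` rect l = rect l"
    and sub: "f ` key l k \<subseteq> lock_space l S" unfolding can_match_def by blast
  have r1: "f (0,1) \<in> rect l" using img assms(1) by (auto simp: rect_def)
  have r2: "f (0,2) \<in> rect l" using img assms(1) by (auto simp: rect_def)
  have r3: "f (0,6 * int l - 2) \<in> rect l" using img assms(1) by (auto simp: rect_def)
  have "(-1, 6 * int k - 2) \<in> key l k"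
    by (auto simp: key_def tooth_attached_def tooth_at_def)
  then have kc: "f (-1, 6 * int k - 2) \<in> lock_space l S" using sub by blast
  from f obtain a b c d tx ty where
    abcd: "(a, b, c, d) \<in> {(1,0,0,1), (-1,0,0,1), (1,0,0,-1), (-1,0,0,-1),
                      (0,1,1,0), (0,-1,1,0), (0,1,-1,0), (0,-1,-1,0)}"
    and fd: "f = (\<lambda>(x, y). (a * x + b * y + tx, c * x + d * y + ty))"
    unfolding grid_iso_def by blast
  from abcd show "k \<in> S"
  proof (elim insertE emptyE)
    assume h: "(a, b, c, d) = (1, 0, 0, 1)"
    then have "tx = 0" "ty = 0" using r1 r3 assms(1) by (auto simp: fd rect_def)
    then show ?thesis using kc h lock_m1[of "6 * int k - 2" l S] by (auto simp: fd)
  next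
    assume h: "(a, b, c, d) = (1, 0, 0, -1)"
    then have "tx = 0" "ty = 6 * int l - 1" using r1 r3 assms(1) by (auto simp: fd rect_def)
    then show ?thesis using kc h lock_m1[of "- (6 * int k - 2) + (6 * int l - 1)" l S]
      by (auto simp: fd) presburger
  next
    assume h: "(a, b, c, d) = (-1, 0, 0, 1)"
    then have "tx = 0" using r1 by (auto simp: fd rect_def)
    then show ?thesis using kc h by (auto simp: fd dest: lock_x)
  next
    assume h: "(a, b, c, d) = (-1, 0, 0, -1)"
    then have "tx = 0" using r1 by (auto simp: fd rect_def)
    then show ?thesis using kc h by (auto simp: fd dest: lock_x)
  qed (use r1 r2 in \<open>auto simp: fd rect_def\<close>)
next
  assume kS: "k \<in> S"
  have gid: "grid_iso id"
    unfolding grid_iso_def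
    by (rule exI[of _ 1], rule exI[of _ 0], rule exI[of _ 0], rule exI[of _ 1],
        rule exI[of _ 0], rule exI[of _ 0]) (auto simp: fun_eq_iff)
  have ksub: "key l k \<subseteq> lock_space l S" using kS by (auto simp: key_def lock_space_def)
  let ?P = "(\<lambda>x. tooth_attached (6 * int x - 2)) ` (S - {k})"
  have "tileable_by_teeth (lock_space l S - key l k)"
    unfolding tileable_by_teeth_def
  proof (intro exI[of _ ?P] conjI ballI impI)
    fix T assume "T \<in> ?P"
    then obtain x where "T = tooth_attached (6 * int x - 2)" by auto
    moreover have "grid_iso (\<lambda>(xa, y). (1 * xa + 0 * y + (-3), 0 * xa + 1 * y + (6 * int x - 2)))"
      unfolding grid_iso_def by blast
    ultimately show "\<exists>f. grid_iso f \<and> T = f ` tooth_at (0, 0)"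
      unfolding tooth_attached_def using tooth_transl by blast
  next
    fix T1 T2 assume "T1 \<in> ?P" "T2 \<in> ?P" "T1 \<noteq> T2"
    then show "T1 \<inter> T2 = {}" using teeth_disj by blast
  next
    show "\<Union> ?P = lock_space l S - key l k" using diff_eq[OF kS] by simp
  qed
  then show "can_match l k S" unfolding can_match_def
    using gid ksub by (intro exI[of _ id]) auto
qed

end
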